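(* Let $G$ be a group, $X$ a right $G$-set, $k$ a commutative ring, $A=\bigoplus_{\sigma\in G}A_\sigma$ a $G$-graded $k$-algebra, and suppose $z\in X$ satisfies $z\sigma=z$ for all $\sigma\in G$. Let $\mathcal C=A\otimes kX$ be the coring described in the context, with cointegral $\delta$ and $A$-central element $e=1_A\otimes z$. Then a module $M=\bigoplus_{x\in X}M_x$ graded by the $G$-set $X$ (viewed as a right $\mathcal C$-comodule) is formally $\mathbb X^{\mathcal C}_{\delta,e}$-smooth if and only if $M=M_z$ (i.e. $M_x=0$ for all $x\neq z$).
   Context: A right $A$-module graded by the $G$-set $X$ is a right $A$-module $M=\bigoplus_{x\in X}M_x$ (decomposition as $k$-modules) with $M_xA_\sigma\subseteq M_{x\sigma}$ for all $x\in X,\sigma\in G$. The $A$-coring $\mathcal C=A\otimes kX$ ($kX$ the free $k$-module on $X$) has left $A$-action on the first factor, right action $(a\otimes x)a_\sigma=aa_\sigma\otimes x\sigma$ for $a_\sigma\in A_\sigma$, coproduct $\Delta_{\mathcal C}(a\otimes x)=(a\otimes x)\otimes_A(1_A\otimes x)$ and counit $\varepsilon_{\mathcal C}(a\otimes x)=a$. Such a graded module $M$ is a right $\mathcal C$-comodule via $m_x\mapsto m_x\otimes_A(1_A\otimes x)$ for $m_x\in M_x$. $\mathcal C$ is coseparable with cointegral $\delta:\mathcal C\otimes_A\mathcal C\cong A\otimes kX\otimes kX\to A$, $a\otimes x\otimes y\mapsto a\delta_{x,y}$ (Kronecker delta). In general, for an $A$-coring $\mathcal C$ (coaction $m\mapsto\sum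 m_{(0)}\otimes_A m_{(1)}$) with cointegral $\delta$ and $e\in\mathcal C^A=\{c:ac=ca\ \forall a\in A\}$, the supplemented S-category $\mathbb X^{\mathcal C}_{\delta,e}$ has $\mathfrak X=\mathfrak M^{\mathcal C}$ (right comodules), $\bar{\mathfrak X}=\mathfrak M_A$ (right $A$-modules), $u^*$ forgetful, $u_*=u_!=-\otimes_A\mathcal C$, $\nu_M(m\otimes_A c)=\sum m_{(0)}\delta(m_{(1)}\otimes_A c)$, $\bar\eta_N(n)=n\otimes_A e$, and $r_N=\nu_{N\otimes_A\mathcal C}\circ(\bar\eta_N\otimes_A\mathcal C):N\otimes_A\mathcal C\to N\otimes_A\mathcal C$, $n\otimes_A c\mapsto\sum n\otimes_A e_{(1)}\delta(e_{(2)}\otimes_A c)$. A right $\mathcal C$-comodule $M$ is formally $\mathbb X^{\mathcal C}_{\delta,e}$-smooth if for every right $A$-module $N$ the map $\mathrm{Hom}^{\mathcal C}(M,N\otimes_A\mathcal C)\to\mathrm{Hom}^{\mathcal C}(M,N\otimes_A\mathcal C)$, $g\mapsto r_N\circ g$, is surjective. *)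

theory Defs
  imports "HOL-Algebra.Ring" "HOL-Algebra.Group"
begin

definition right_Gset :: "('g, 'b) monoid_scheme \<Rightarrow> 'x set \<Rightarrow> ('x \<Rightarrow> 'g \<Rightarrow> 'x) \<Rightarrow> bool" where
  "right_Gset G X act \<longleftrightarrow> group G
     \<and> (\<forall>x\<in>X. \<forall>\<sigma>\<in>carrier G. act x \<sigma> \<in> X)
     \<and> (\<forall>x\<in>X. act x \<one>\<^bsub>G\<^esub> = x)
     \<and> (\<forall>x\<in>X. \<forall>\<sigma>\<in>carrier G. \<forall>\<tau>\<in>carrier G. act (act x \<sigma>) \<tau> = act x (\<sigma> \<otimes>\<^bsub>G\<^esub> \<tau>))"

definition direct_sum_decomp :: "('a, 'b) ring_scheme \<Rightarrow> 'i set \<Rightarrow> ('i \<Rightarrow> 'a set) \<Rightarrow> bool" where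
  "direct_sum_decomp R I D \<longleftrightarrow>
     (\<forall>i\<in>I. subgroup (D i) (add_monoid R)) \<and>
     (\<forall>a\<in>carrier R. \<exists>!c. (\<forall>i\<in>I. c i \<in> D i) \<and> (\<forall>i. i \<notin> I \<longrightarrow> c i = \<zero>\<^bsub>R\<^esub>)
          \<and> finite {i\<in>I. c i \<noteq> \<zero>\<^bsub>R\<^esub>} \<and> a = finsum R c {i\<in>I. c i \<noteq> \<zero>\<^bsub>R\<^esub>})"

definition dcomp :: "('a, 'b) ring_scheme \<Rightarrow> 'i set \<Rightarrow> ('i \<Rightarrow> 'a set) \<Rightarrow> 'i \<Rightarrow> 'a \<Rightarrow> 'a" where
  "dcomp R I D i a = (THE c. (\<forall>i\<in>I. c i \<in> D i) \<and> (\<forall>i. i \<notin> I \<longrightarrow> c i = \<zero>\<^bsub>R\<^esub>)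
          \<and> finite {i\<in>I. c i \<noteq> \<zero>\<^bsub>R\<^esub>} \<and> a = finsum R c {i\<in>I. c i \<noteq> \<zero>\<^bsub>R\<^esub>}) i"

definition graded_ring :: "('a, 'c) ring_scheme \<Rightarrow> ('g, 'b) monoid_scheme \<Rightarrow> ('g \<Rightarrow> 'a set) \<Rightarrow> bool" where
  "graded_ring A G Agr \<longleftrightarrow> ring A \<and> group G \<and> direct_sum_decomp A (carrier G) Agr
     \<and> (\<forall>\<sigma>\<in>carrier G. \<forall>\<tau>\<in>carrier G. \<forall>a\<in>Agr \<sigma>. \<forall>b\<in>Agr \<tau>. a \<otimes>\<^bsub>A\<^esub> b \<in> Agr (\<sigma> \<otimes>\<^bsub>G\<^esub> \<tau>))"

definition right_module :: "('a, 'c) ring_scheme \<Rightarrow> ('n, 'd) ring_scheme \<Rightarrow> ('n \<Rightarrow> 'a \<Rightarrow> 'n) \<Rightarrow> bool" where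
  "right_module A N nact \<longleftrightarrow> ring A \<and> abelian_group N
     \<and> (\<forall>n\<in>carrier N. \<forall>a\<in>carrier A. nact n a \<in> carrier N)
     \<and> (\<forall>n\<in>carrier N. \<forall>n'\<in>carrier N. \<forall>a\<in>carrier A. nact (n \<oplus>\<^bsub>N\<^esub> n') a = nact n a \<oplus>\<^bsub>N\<^esub> nact n' a)
     \<and> (\<forall>n\<in>carrier N. \<forall>a\<in>carrier A. \<forall>b\<in>carrier A. nact n (a \<oplus>\<^bsub>A\<^esub> b) = nact n a \<oplus>\<^bsub>N\<^esub> nact n b)
     \<and> (\<forall>n\<in>carrier N. \<forall>a\<in>carrier A. \<forall>b\<in>carrier A. nact (nact n a) b = nact n (a \<otimes>\<^bsub>A\<^esub> b))
     \<and> (\<forall>n\<in>carrier N. nact n \<one>\<^bsub>A\<^esub> = n)"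

definition Xgraded_module :: "('a, 'c) ring_scheme \<Rightarrow> ('g, 'b) monoid_scheme \<Rightarrow> ('g \<Rightarrow> 'a set)
    \<Rightarrow> 'x set \<Rightarrow> ('x \<Rightarrow> 'g \<Rightarrow> 'x) \<Rightarrow> ('m, 'd) ring_scheme \<Rightarrow> ('m \<Rightarrow> 'a \<Rightarrow> 'm) \<Rightarrow> ('x \<Rightarrow> 'm set) \<Rightarrow> bool" where
  "Xgraded_module A G Agr X act M mact Mgr \<longleftrightarrow> right_module A M mact \<and> direct_sum_decomp M X Mgr
     \<and> (\<forall>x\<in>X. \<forall>\<sigma>\<in>carrier G. \<forall>m\<in>Mgr x. \<forall>a\<in>Agr \<sigma>. mact m a \<in> Mgr (act x \<sigma>))"

(* ---------------------------------------------------------------------------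
   Concrete model of the coring C = A \<otimes> kX and of N \<otimes>_A C.
   * An element of C = A \<otimes> kX is a finitely supported c : X \<Rightarrow> A  (c = \<Sum>_x c x \<otimes> x).
   * An element of C \<otimes>_A C \<cong> A \<otimes> kX \<otimes> kX is a finitely supported F : X \<times> X \<Rightarrow> A.
   * An element of N \<otimes>_A C \<cong> N \<otimes> kX is a finitely supported \<phi> : X \<Rightarrow> N,
     \<phi> = \<Sum>_y \<phi> y \<otimes>_A (1_A \<otimes> y).
   --------------------------------------------------------------------------- *)

definition supp :: "('n, 'd) ring_scheme \<Rightarrow> 'x set \<Rightarrow> ('x \<Rightarrow> 'n) \<Rightarrow> 'x set" where
  "supp N X \<phi> = {y\<in>X. \<phi> y \<noteq> \<zero>\<^bsub>N\<^esub>}"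

(* carrier of N \<otimes>_A C (also used for C itself with N = A) *)
definition tensC :: "('n, 'd) ring_scheme \<Rightarrow> 'x set \<Rightarrow> ('x \<Rightarrow> 'n) set" where
  "tensC N X = {\<phi>. (\<forall>y. \<phi> y \<in> carrier N) \<and> (\<forall>y. y \<notin> X \<longrightarrow> \<phi> y = \<zero>\<^bsub>N\<^esub>) \<and> finite (supp N X \<phi>)}"

(* right A-action on N \<otimes>_A C:  (n \<otimes> (1 \<otimes> y)) a = \<Sum>_\<sigma> n a_\<sigma> \<otimes> (1 \<otimes> y\<sigma>) *)
definition tens_act :: "('a, 'c) ring_scheme \<Rightarrow> ('g, 'b) monoid_scheme \<Rightarrow> ('g \<Rightarrow> 'a set)
    \<Rightarrow> 'x set \<Rightarrow> ('x \<Rightarrow> 'g \<Rightarrow> 'x) \<Rightarrow> ('n, 'd) ring_scheme \<Rightarrow> ('n \<Rightarrow> 'a \<Rightarrow> 'n)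
    \<Rightarrow> ('x \<Rightarrow> 'n) \<Rightarrow> 'a \<Rightarrow> ('x \<Rightarrow> 'n)" where
  "tens_act A G Agr X act N nact \<phi> a = (\<lambda>w. finsum N (\<lambda>(y, \<sigma>). nact (\<phi> y) (dcomp A (carrier G) Agr \<sigma> a))
      {(y, \<sigma>). y \<in> supp N X \<phi> \<and> \<sigma> \<in> carrier G \<and> dcomp A (carrier G) Agr \<sigma> a \<noteq> \<zero>\<^bsub>A\<^esub> \<and> act y \<sigma> = w})"

(* coproduct of C:  \<Delta>(a \<otimes> x) = (a \<otimes> x) \<otimes>_A (1 \<otimes> x)  \<mapsto>  a \<otimes> x \<otimes> x *)
definition cor_Delta :: "('a, 'c) ring_scheme \<Rightarrow> ('x \<Rightarrow> 'a) \<Rightarrow> ('x \<times> 'x \<Rightarrow> 'a)" where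
  "cor_Delta A c = (\<lambda>(u, v). if u = v then c u else \<zero>\<^bsub>A\<^esub>)"

(* cointegral \<delta> : A \<otimes> kX \<otimes> kX \<rightarrow> A,  a \<otimes> x \<otimes> y \<mapsto> a \<delta>_{x,y} *)
definition cor_delta :: "('a, 'c) ring_scheme \<Rightarrow> 'x set \<Rightarrow> ('x \<times> 'x \<Rightarrow> 'a) \<Rightarrow> 'a" where
  "cor_delta A X F = finsum A (\<lambda>x. F (x, x)) {x\<in>X. F (x, x) \<noteq> \<zero>\<^bsub>A\<^esub>}"

(* the element e = 1_A \<otimes> z of C *)
definition cor_e :: "('a, 'c) ring_scheme \<Rightarrow> 'x \<Rightarrow> ('x \<Rightarrow> 'a)" where
  "cor_e A z = (\<lambda>x. if x = z then \<one>\<^bsub>A\<^esub> else \<zero>\<^bsub>A\<^esub>)"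

(* the element (1 \<otimes> v) \<otimes>_A (1 \<otimes> y) = 1 \<otimes> v \<otimes> y of C \<otimes>_A C *)
definition unit_tensor :: "('a, 'c) ring_scheme \<Rightarrow> 'x \<Rightarrow> 'x \<Rightarrow> ('x \<times> 'x \<Rightarrow> 'a)" where
  "unit_tensor A v y = (\<lambda>p. if p = (v, y) then \<one>\<^bsub>A\<^esub> else \<zero>\<^bsub>A\<^esub>)"

(* r_N : N \<otimes>_A C \<rightarrow> N \<otimes>_A C,  n \<otimes> c \<mapsto> \<Sum> n \<otimes> e_(1) \<delta>(e_(2) \<otimes> c), for a general
   map \<delta> : C \<otimes>_A C \<rightarrow> A and e \<in> C.  With \<phi> = \<Sum>_y \<phi> y \<otimes> (1 \<otimes> y) and
   \<Delta>(e) = \<Sum>_{u,v} (E(u,v) \<otimes> u) \<otimes>_A (1 \<otimes> v), writing b = \<delta>((1\<otimes>v)\<otimes>_A(1\<otimes>y)),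
   (E(u,v) \<otimes> u) b = \<Sum>_\<tau> E(u,v) b_\<tau> \<otimes> u\<tau>, and n \<otimes>_A (a \<otimes> w) = n a \<otimes> (1 \<otimes> w). *)
definition r_map :: "('a, 'c) ring_scheme \<Rightarrow> ('g, 'b) monoid_scheme \<Rightarrow> ('g \<Rightarrow> 'a set)
    \<Rightarrow> 'x set \<Rightarrow> ('x \<Rightarrow> 'g \<Rightarrow> 'x) \<Rightarrow> (('x \<times> 'x \<Rightarrow> 'a) \<Rightarrow> 'a) \<Rightarrow> ('x \<Rightarrow> 'a)
    \<Rightarrow> ('n, 'd) ring_scheme \<Rightarrow> ('n \<Rightarrow> 'a \<Rightarrow> 'n) \<Rightarrow> ('x \<Rightarrow> 'n) \<Rightarrow> ('x \<Rightarrow> 'n)" where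
  "r_map A G Agr X act \<delta> e N nact \<phi> = (\<lambda>w. finsum N
      (\<lambda>(y, u, v, \<tau>). nact (\<phi> y) (cor_Delta A e (u, v) \<otimes>\<^bsub>A\<^esub> dcomp A (carrier G) Agr \<tau> (\<delta> (unit_tensor A v y))))
      {(y, u, v, \<tau>). y \<in> supp N X \<phi> \<and> u \<in> X \<and> v \<in> X \<and> cor_Delta A e (u, v) \<noteq> \<zero>\<^bsub>A\<^esub>
          \<and> \<tau> \<in> carrier G \<and> dcomp A (carrier G) Agr \<tau> (\<delta> (unit_tensor A v y)) \<noteq> \<zero>\<^bsub>A\<^esub>
          \<and> act u \<tau> = w})"

(* coaction of N \<otimes>_A C (= N \<otimes> \<Delta>): \<phi> \<mapsto> \<Sum>_x (\<phi> x \<otimes> (1 \<otimes> x)) \<otimes>_A (1 \<otimes> x),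
   an element of (N \<otimes>_A C) \<otimes>_A C modelled as x \<mapsto> (its coefficient in N \<otimes>_A C) *)
definition tens_coact :: "('n, 'd) ring_scheme \<Rightarrow> ('x \<Rightarrow> 'n) \<Rightarrow> 'x \<Rightarrow> ('x \<Rightarrow> 'n)" where
  "tens_coact N \<phi> x = (\<lambda>y. if y = x then \<phi> y else \<zero>\<^bsub>N\<^esub>)"

(* coaction of the X-graded module M: m \<mapsto> \<Sum>_x m_x \<otimes>_A (1 \<otimes> x), modelled as x \<mapsto> m_x *)
definition mod_coact :: "('m, 'd) ring_scheme \<Rightarrow> 'x set \<Rightarrow> ('x \<Rightarrow> 'm set) \<Rightarrow> 'x \<Rightarrow> 'm \<Rightarrow> 'm" where
  "mod_coact M X Mgr x m = dcomp M X Mgr x m"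

(* Hom^C(M, N \<otimes>_A C): right A-linear maps compatible with the coactions,
   i.e. \<rho>_{N\<otimes>C} \<circ> g = (g \<otimes> C) \<circ> \<rho>_M *)
definition HomC :: "('a, 'c) ring_scheme \<Rightarrow> ('g, 'b) monoid_scheme \<Rightarrow> ('g \<Rightarrow> 'a set)
    \<Rightarrow> 'x set \<Rightarrow> ('x \<Rightarrow> 'g \<Rightarrow> 'x) \<Rightarrow> ('m, 'e) ring_scheme \<Rightarrow> ('m \<Rightarrow> 'a \<Rightarrow> 'm) \<Rightarrow> ('x \<Rightarrow> 'm set)
    \<Rightarrow> ('n, 'd) ring_scheme \<Rightarrow> ('n \<Rightarrow> 'a \<Rightarrow> 'n) \<Rightarrow> ('m \<Rightarrow> 'x \<Rightarrow> 'n) set" where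
  "HomC A G Agr X act M mact Mgr N nact = {g.
      (\<forall>m\<in>carrier M. g m \<in> tensC N X)
    \<and> (\<forall>m\<in>carrier M. \<forall>m'\<in>carrier M. g (m \<oplus>\<^bsub>M\<^esub> m') = (\<lambda>w. g m w \<oplus>\<^bsub>N\<^esub> g m' w))
    \<and> (\<forall>m\<in>carrier M. \<forall>a\<in>carrier A. g (mact m a) = tens_act A G Agr X act N nact (g m) a)
    \<and> (\<forall>m\<in>carrier M. \<forall>x\<in>X. tens_coact N (g m) x = g (mod_coact M X Mgr x m))}"

(* M is formally smooth for the S-category built from delta and e; N ranges over right A-modules on a fixed element type *)
definition formally_smooth :: "'n itself \<Rightarrow> ('a, 'c) ring_scheme \<Rightarrow> ('g, 'b) monoid_scheme \<Rightarrow> ('g \<Rightarrow> 'a set)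
    \<Rightarrow> 'x set \<Rightarrow> ('x \<Rightarrow> 'g \<Rightarrow> 'x) \<Rightarrow> (('x \<times> 'x \<Rightarrow> 'a) \<Rightarrow> 'a) \<Rightarrow> ('x \<Rightarrow> 'a)
    \<Rightarrow> ('m, 'e) ring_scheme \<Rightarrow> ('m \<Rightarrow> 'a \<Rightarrow> 'm) \<Rightarrow> ('x \<Rightarrow> 'm set) \<Rightarrow> bool" where
  "formally_smooth _ A G Agr X act \<delta> e M mact Mgr \<longleftrightarrow>
     (\<forall>(N :: 'n ring) nact. right_module A N nact \<longrightarrow>
        (\<forall>g\<in>HomC A G Agr X act M mact Mgr N nact.
           \<exists>g'\<in>HomC A G Agr X act M mact Mgr N nact.
              \<forall>m\<in>carrier M. r_map A G Agr X act \<delta> e N nact (g' m) = g m))"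

end

theory Submission
  imports Defs
begin



definition dprop :: "('a, 'b) ring_scheme \<Rightarrow> 'i set \<Rightarrow> ('i \<Rightarrow> 'a set) \<Rightarrow> 'a \<Rightarrow> ('i \<Rightarrow> 'a) \<Rightarrow> bool" where
  "dprop G I D a c \<longleftrightarrow> (\<forall>i\<in>I. c i \<in> D i) \<and> (\<forall>i. i \<notin> I \<longrightarrow> c i = \<zero>\<^bsub>G\<^esub>)
          \<and> finite {i\<in>I. c i \<noteq> \<zero>\<^bsub>G\<^esub>} \<and> a = finsum G c {i\<in>I. c i \<noteq> \<zero>\<^bsub>G\<^esub>}"


context abelian_group begin

lemma dsd_sub: "direct_sum_decomp G I D \<Longrightarrow> i \<in> I \<Longrightarrow> D i \<subseteq> carrier G"
  unfolding direct_sum_decomp_def using subgroup.subset by fastforce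

lemma dsd_zero: "direct_sum_decomp G I D \<Longrightarrow> i \<in> I \<Longrightarrow> \<zero> \<in> D i"
  unfolding direct_sum_decomp_def using subgroup.one_closed by fastforce

lemma dsd_add: "direct_sum_decomp G I D \<Longrightarrow> i \<in> I \<Longrightarrow> a \<in> D i \<Longrightarrow> b \<in> D i \<Longrightarrow> a \<oplus> b \<in> D i"
  unfolding direct_sum_decomp_def using subgroup.m_closed by fastforce

lemma dsd_finsum:
  assumes "direct_sum_decomp G I D" "i \<in> I" "finite S" "\<forall>j\<in>S. f j \<in> D i"
  shows "finsum G f S \<in> D i"
  using assms(3,4)
proof (induction S rule: finite_induct)
  case empty then show ?case using dsd_zero[OF assms(1,2)] by simp
next
  case (insert x F)
  have "f \<in> insert x F \<rightarrow> carrier G" using insert.prems dsd_sub[OF assms(1,2)] by auto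
  then have "finsum G f (insert x F) = f x \<oplus> finsum G f F" using insert by (simp add: finsum_insert)
  then show ?case using insert dsd_add[OF assms(1,2)] by simp
qed

lemma dcomp_props:
  assumes "direct_sum_decomp G I D" "a \<in> carrier G"
  shows "(\<forall>i\<in>I. dcomp G I D i a \<in> D i) \<and> (\<forall>i. i \<notin> I \<longrightarrow> dcomp G I D i a = \<zero>)
          \<and> finite {i\<in>I. dcomp G I D i a \<noteq> \<zero>} \<and> a = finsum G (\<lambda>i. dcomp G I D i a) {i\<in>I. dcomp G I D i a \<noteq> \<zero>}"
proof -
  have ex: "\<exists>!c. dprop G I D a c" unfolding dprop_def using conjunct2[OF assms(1)[unfolded direct_sum_decomp_def]] assms(2) by (rule bspec)
  have "(\<lambda>i. dcomp G I D i a) = (THE c. dprop G I D a c)" unfolding dcomp_def dprop_def by (rule refl)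
  then have "dprop G I D a (\<lambda>i. dcomp G I D i a)" using theI'[OF ex] by (simp only:)
  then show ?thesis unfolding dprop_def .
qed

lemma dcomp_unique:
  assumes "direct_sum_decomp G I D" "\<forall>i\<in>I. c i \<in> D i" "\<forall>i. i \<notin> I \<longrightarrow> c i = \<zero>"
    "finite S" "S \<subseteq> I" "\<forall>i\<in>I-S. c i = \<zero>" "a = finsum G c S"
  shows "dcomp G I D i a = c i"
proof -
  have cc: "c \<in> S \<rightarrow> carrier G" using assms(2,5) dsd_sub[OF assms(1)] by blast
  have sub: "{i\<in>I. c i \<noteq> \<zero>} \<subseteq> S" using assms(6) by blast
  have fin: "finite {i\<in>I. c i \<noteq> \<zero>}" using sub assms(4) finite_subset by blast
  have "finsum G c {i\<in>I. c i \<noteq> \<zero>} = finsum G c S"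
    by (rule add.finprod_mono_neutral_cong_left) (use assms(4,5) sub cc in auto)
  then have P: "dprop G I D a c" unfolding dprop_def using assms(2,3) fin by (simp add: assms(7))
  have ex: "\<exists>!c. dprop G I D a c" unfolding dprop_def using conjunct2[OF assms(1)[unfolded direct_sum_decomp_def]] finsum_closed[OF cc] assms(7) by (simp only:)
  have "(\<lambda>i. dcomp G I D i a) = (THE c. dprop G I D a c)" unfolding dcomp_def dprop_def by (rule refl)
  also have "\<dots> = c" apply (rule the1_equality) using ex apply assumption using P apply assumption done
  finally show ?thesis by (metis fun_cong)
qed

end



lemma rm_facts:
  assumes "right_module A N nact"
  shows "ring A" "abelian_group N" "\<And>n a. n\<in>carrier N \<Longrightarrow> a\<in>carrier A \<Longrightarrow> nact n a \<in> carrier N"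
   "\<And>n n' a. n\<in>carrier N \<Longrightarrow> n'\<in>carrier N \<Longrightarrow> a\<in>carrier A \<Longrightarrow> nact (n \<oplus>\<^bsub>N\<^esub> n') a = nact n a \<oplus>\<^bsub>N\<^esub> nact n' a"
   "\<And>n a b. n\<in>carrier N \<Longrightarrow> a\<in>carrier A \<Longrightarrow> b\<in>carrier A \<Longrightarrow> nact n (a \<oplus>\<^bsub>A\<^esub> b) = nact n a \<oplus>\<^bsub>N\<^esub> nact n b"
   "\<And>n a b. n\<in>carrier N \<Longrightarrow> a\<in>carrier A \<Longrightarrow> b\<in>carrier A \<Longrightarrow> nact (nact n a) b = nact n (a \<otimes>\<^bsub>A\<^esub> b)"
   "\<And>n. n\<in>carrier N \<Longrightarrow> nact n \<one>\<^bsub>A\<^esub> = n"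
  using assms unfolding right_module_def by auto

lemma ag_idem_zero: "abelian_group N \<Longrightarrow> x \<in> carrier N \<Longrightarrow> x = x \<oplus>\<^bsub>N\<^esub> x \<Longrightarrow> x = \<zero>\<^bsub>N\<^esub>"
proof -
  assume N: "abelian_group N" and x: "x \<in> carrier N" and e: "x = x \<oplus>\<^bsub>N\<^esub> x"
  interpret N: abelian_group N by (rule N)
  show ?thesis using e N.add.l_cancel_one'[OF x x] by simp
qed

lemma rm_zero_right:
  assumes "right_module A N nact" "n \<in> carrier N"
  shows "nact n \<zero>\<^bsub>A\<^esub> = \<zero>\<^bsub>N\<^esub>"
proof -
  note F = rm_facts[OF assms(1)]
  interpret A: ring A by (rule F(1))
  have z: "\<zero>\<^bsub>A\<^esub> \<in> carrier A" by simp
  have "nact n \<zero>\<^bsub>A\<^esub> = nact n (\<zero>\<^bsub>A\<^esub> \<oplus>\<^bsub>A\<^esub> \<zero>\<^bsub>A\<^esub>)" by simp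
  also have "\<dots> = nact n \<zero>\<^bsub>A\<^esub> \<oplus>\<^bsub>N\<^esub> nact n \<zero>\<^bsub>A\<^esub>" by (rule F(5)[OF assms(2) z z])
  finally show ?thesis by (rule ag_idem_zero[OF F(2) F(3)[OF assms(2) z]])
qed

lemma rm_finsum_right:
  assumes "right_module A N nact" "n \<in> carrier N" "finite S" "f \<in> S \<rightarrow> carrier A"
  shows "nact n (finsum A f S) = finsum N (\<lambda>i. nact n (f i)) S"
  using assms(3,4)
proof (induction S rule: finite_induct)
  case empty
  interpret A: ring A by (rule rm_facts(1)[OF assms(1)])
  interpret N: abelian_group N by (rule rm_facts(2)[OF assms(1)])
  show ?case using rm_zero_right[OF assms(1,2)] by simp
next
  case (insert x F)
  note R = rm_facts[OF assms(1)]
  interpret A: ring A by (rule R(1))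
  interpret N: abelian_group N by (rule R(2))
  have "nact n (finsum A f (insert x F)) = nact n (f x \<oplus>\<^bsub>A\<^esub> finsum A f F)"
    using insert by (simp add: A.finsum_insert)
  also have "\<dots> = nact n (f x) \<oplus>\<^bsub>N\<^esub> nact n (finsum A f F)"
    using insert R(5) assms(2) A.finsum_closed by auto
  also have "\<dots> = finsum N (\<lambda>i. nact n (f i)) (insert x F)"
    using insert R(3) assms(2) by (simp add: N.finsum_insert Pi_def)
  finally show ?case .
qed


lemma rm_finsum_left:
  assumes "right_module A N nact" "a \<in> carrier A" "finite S" "f \<in> S \<rightarrow> carrier N"
  shows "nact (finsum N f S) a = finsum N (\<lambda>i. nact (f i) a) S"
  using assms(3,4)
proof (induction S rule: finite_induct)
  case empty
  note R = rm_facts[OF assms(1)]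
  interpret A: ring A by (rule R(1))
  interpret N: abelian_group N by (rule R(2))
  have z: "\<zero>\<^bsub>N\<^esub> \<in> carrier N" by simp
  have "nact \<zero>\<^bsub>N\<^esub> a = nact (\<zero>\<^bsub>N\<^esub> \<oplus>\<^bsub>N\<^esub> \<zero>\<^bsub>N\<^esub>) a" by simp
  also have "\<dots> = nact \<zero>\<^bsub>N\<^esub> a \<oplus>\<^bsub>N\<^esub> nact \<zero>\<^bsub>N\<^esub> a" by (rule R(4)[OF z z assms(2)])
  finally have "nact \<zero>\<^bsub>N\<^esub> a = \<zero>\<^bsub>N\<^esub>" by (rule ag_idem_zero[OF R(2) R(3)[OF z assms(2)]])
  then show ?case by simp
next
  case (insert x F)
  note R = rm_facts[OF assms(1)]
  interpret A: ring A by (rule R(1))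
  interpret N: abelian_group N by (rule R(2))
  have "nact (finsum N f (insert x F)) a = nact (f x \<oplus>\<^bsub>N\<^esub> finsum N f F) a"
    using insert by (simp add: N.finsum_insert)
  also have "\<dots> = nact (f x) a \<oplus>\<^bsub>N\<^esub> nact (finsum N f F) a"
    using insert R(4) assms(2) N.finsum_closed by auto
  also have "\<dots> = finsum N (\<lambda>i. nact (f i) a) (insert x F)"
    using insert R(3) assms(2) by (simp add: N.finsum_insert Pi_def)
  finally show ?case .
qed




context
  fixes A :: "'a ring" and G :: "'g monoid" and Agr :: "'g \<Rightarrow> 'a set"
    and X :: "'x set" and act :: "'x \<Rightarrow> 'g \<Rightarrow> 'x"
    and M :: "'m ring" and mact :: "'m \<Rightarrow> 'a \<Rightarrow> 'm" and Mgr :: "'x \<Rightarrow> 'm set"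
  assumes gr: "graded_ring A G Agr"
    and gs: "right_Gset G X act"
    and xm: "Xgraded_module A G Agr X act M mact Mgr"
begin

lemma rmM: "right_module A M mact" using xm unfolding Xgraded_module_def by blast
lemma dsM: "direct_sum_decomp M X Mgr" using xm unfolding Xgraded_module_def by blast
lemma dsA: "direct_sum_decomp A (carrier G) Agr" using gr unfolding graded_ring_def by blast
lemma agM: "abelian_group M" by (rule rm_facts(2)[OF rmM])
lemma rA: "ring A" by (rule rm_facts(1)[OF rmM])
lemma agA: "abelian_group A" using rA ring.is_abelian_group by blast
lemma gradM: "x \<in> X \<Longrightarrow> \<sigma> \<in> carrier G \<Longrightarrow> m \<in> Mgr x \<Longrightarrow> a \<in> Agr \<sigma> \<Longrightarrow> mact m a \<in> Mgr (act x \<sigma>)"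
  using xm unfolding Xgraded_module_def by blast
lemma actX: "x \<in> X \<Longrightarrow> \<sigma> \<in> carrier G \<Longrightarrow> act x \<sigma> \<in> X"
  using gs unfolding right_Gset_def by blast

lemma dM_props: "m \<in> carrier M \<Longrightarrow> (\<forall>i\<in>X. dcomp M X Mgr i m \<in> Mgr i) \<and> (\<forall>i. i \<notin> X \<longrightarrow> dcomp M X Mgr i m = \<zero>\<^bsub>M\<^esub>)
          \<and> finite {i\<in>X. dcomp M X Mgr i m \<noteq> \<zero>\<^bsub>M\<^esub>} \<and> m = finsum M (\<lambda>i. dcomp M X Mgr i m) {i\<in>X. dcomp M X Mgr i m \<noteq> \<zero>\<^bsub>M\<^esub>}"
  by (rule abelian_group.dcomp_props[OF agM dsM])

lemma dA_props: "a \<in> carrier A \<Longrightarrow> (\<forall>i\<in>carrier G. dcomp A (carrier G) Agr i a \<in> Agr i) \<and> (\<forall>i. i \<notin> carrier G \<longrightarrow> dcomp A (carrier G) Agr i a = \<zero>\<^bsub>A\<^esub>)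
          \<and> finite {i\<in>carrier G. dcomp A (carrier G) Agr i a \<noteq> \<zero>\<^bsub>A\<^esub>} \<and> a = finsum A (\<lambda>i. dcomp A (carrier G) Agr i a) {i\<in>carrier G. dcomp A (carrier G) Agr i a \<noteq> \<zero>\<^bsub>A\<^esub>}"
  by (rule abelian_group.dcomp_props[OF agA dsA])

lemma dM_carrier: "m \<in> carrier M \<Longrightarrow> dcomp M X Mgr i m \<in> carrier M"
proof -
  assume m: "m \<in> carrier M"
  interpret M: abelian_group M by (rule agM)
  show ?thesis using dM_props[OF m] M.dsd_sub[OF dsM] by (cases "i \<in> X") auto
qed

lemma dA_carrier: "a \<in> carrier A \<Longrightarrow> dcomp A (carrier G) Agr i a \<in> carrier A"
proof -
  assume a: "a \<in> carrier A"
  interpret A: abelian_group A by (rule agA)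
  show ?thesis using dA_props[OF a] A.dsd_sub[OF dsA] by (cases "i \<in> carrier G") auto
qed

lemma hom_tensC: "m \<in> carrier M \<Longrightarrow> (\<lambda>x. dcomp M X Mgr x m) \<in> tensC M X"
  unfolding tensC_def supp_def using dM_props dM_carrier by blast

lemma hom_add: "m \<in> carrier M \<Longrightarrow> m' \<in> carrier M \<Longrightarrow>
   (\<lambda>x. dcomp M X Mgr x (m \<oplus>\<^bsub>M\<^esub> m')) = (\<lambda>w. dcomp M X Mgr w m \<oplus>\<^bsub>M\<^esub> dcomp M X Mgr w m')"
proof
  fix w assume m: "m \<in> carrier M" and m': "m' \<in> carrier M"
  interpret M: abelian_group M by (rule agM)
  define S1 where "S1 = {i\<in>X. dcomp M X Mgr i m \<noteq> \<zero>\<^bsub>M\<^esub>}"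
  define S2 where "S2 = {i\<in>X. dcomp M X Mgr i m' \<noteq> \<zero>\<^bsub>M\<^esub>}"
  note P1 = dM_props[OF m, folded S1_def] and P2 = dM_props[OF m', folded S2_def]
  have c1: "(\<lambda>i. dcomp M X Mgr i m) \<in> S \<rightarrow> carrier M" for S using dM_carrier[OF m] by blast
  have c2: "(\<lambda>i. dcomp M X Mgr i m') \<in> S \<rightarrow> carrier M" for S using dM_carrier[OF m'] by blast
  have fin: "finite (S1 \<union> S2)" using P1 P2 by blast
  have e1: "finsum M (\<lambda>i. dcomp M X Mgr i m) S1 = finsum M (\<lambda>i. dcomp M X Mgr i m) (S1 \<union> S2)"
    by (rule M.add.finprod_mono_neutral_cong_left) (use fin c1 in \<open>auto simp: S1_def S2_def\<close>)
  have e2: "finsum M (\<lambda>i. dcomp M X Mgr i m') S2 = finsum M (\<lambda>i. dcomp M X Mgr i m') (S1 \<union> S2)"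
    by (rule M.add.finprod_mono_neutral_cong_left) (use fin c2 in \<open>auto simp: S1_def S2_def\<close>)
  have sum: "m \<oplus>\<^bsub>M\<^esub> m' = finsum M (\<lambda>w. dcomp M X Mgr w m \<oplus>\<^bsub>M\<^esub> dcomp M X Mgr w m') (S1 \<union> S2)"
  proof -
    have "m \<oplus>\<^bsub>M\<^esub> m' = finsum M (\<lambda>i. dcomp M X Mgr i m) S1 \<oplus>\<^bsub>M\<^esub> finsum M (\<lambda>i. dcomp M X Mgr i m') S2"
      using P1 P2 by (metis (no_types, lifting))
    also have "\<dots> = finsum M (\<lambda>w. dcomp M X Mgr w m \<oplus>\<^bsub>M\<^esub> dcomp M X Mgr w m') (S1 \<union> S2)"
      unfolding e1 e2 by (rule M.finsum_addf[symmetric, OF c1 c2])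
    finally show ?thesis .
  qed
  show "dcomp M X Mgr w (m \<oplus>\<^bsub>M\<^esub> m') = dcomp M X Mgr w m \<oplus>\<^bsub>M\<^esub> dcomp M X Mgr w m'"
  proof (rule M.dcomp_unique[OF dsM _ _ fin _ _ sum])
    show "\<forall>i\<in>X. dcomp M X Mgr i m \<oplus>\<^bsub>M\<^esub> dcomp M X Mgr i m' \<in> Mgr i"
      using P1 P2 M.dsd_add[OF dsM] by blast
    show "\<forall>i. i \<notin> X \<longrightarrow> dcomp M X Mgr i m \<oplus>\<^bsub>M\<^esub> dcomp M X Mgr i m' = \<zero>\<^bsub>M\<^esub>"
      using P1 P2 by simp
    show "S1 \<union> S2 \<subseteq> X" unfolding S1_def S2_def by blast
    show "\<forall>i\<in>X - (S1 \<union> S2). dcomp M X Mgr i m \<oplus>\<^bsub>M\<^esub> dcomp M X Mgr i m' = \<zero>\<^bsub>M\<^esub>"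
      unfolding S1_def S2_def by simp
  qed
qed

lemma hom_coact: "m \<in> carrier M \<Longrightarrow> x \<in> X \<Longrightarrow>
   tens_coact M (\<lambda>x. dcomp M X Mgr x m) x = (\<lambda>y. dcomp M X Mgr y (mod_coact M X Mgr x m))"
proof
  fix y assume m: "m \<in> carrier M" and x: "x \<in> X"
  interpret M: abelian_group M by (rule agM)
  note P = dM_props[OF m]
  have c: "(\<lambda>i. if i = x then dcomp M X Mgr x m else \<zero>\<^bsub>M\<^esub>) \<in> {x} \<rightarrow> carrier M" using dM_carrier[OF m] by simp
  have s: "dcomp M X Mgr x m = finsum M (\<lambda>i. if i = x then dcomp M X Mgr x m else \<zero>\<^bsub>M\<^esub>) {x}"
    using M.finsum_singleton[of x "{x}" "\<lambda>i. dcomp M X Mgr x m"] dM_carrier[OF m] by (simp add: eq_commute)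
  have "dcomp M X Mgr y (dcomp M X Mgr x m) = (if y = x then dcomp M X Mgr x m else \<zero>\<^bsub>M\<^esub>)"
  proof (rule M.dcomp_unique[OF dsM _ _ _ _ _ s])
    show "\<forall>i\<in>X. (if i = x then dcomp M X Mgr x m else \<zero>\<^bsub>M\<^esub>) \<in> Mgr i"
      using P x M.dsd_zero[OF dsM] by auto
  qed (use x in auto)
  then show "tens_coact M (\<lambda>x. dcomp M X Mgr x m) x y = dcomp M X Mgr y (mod_coact M X Mgr x m)"
    unfolding tens_coact_def mod_coact_def by simp
qed


lemma hom_lin: "m \<in> carrier M \<Longrightarrow> a \<in> carrier A \<Longrightarrow>
   (\<lambda>x. dcomp M X Mgr x (mact m a)) = tens_act A G Agr X act M mact (\<lambda>x. dcomp M X Mgr x m) a"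
proof
  fix w assume m: "m \<in> carrier M" and a: "a \<in> carrier A"
  interpret M: abelian_group M by (rule agM)
  interpret A: ring A by (rule rA)
  note R = rm_facts[OF rmM]
  define Sm where "Sm = {x\<in>X. dcomp M X Mgr x m \<noteq> \<zero>\<^bsub>M\<^esub>}"
  define Sa where "Sa = {\<sigma>\<in>carrier G. dcomp A (carrier G) Agr \<sigma> a \<noteq> \<zero>\<^bsub>A\<^esub>}"
  define f where "f = (\<lambda>(y, \<sigma>). mact (dcomp M X Mgr y m) (dcomp A (carrier G) Agr \<sigma> a))"
  define P where "P = (\<lambda>w. {(y, \<sigma>). y \<in> Sm \<and> \<sigma> \<in> carrier G \<and> dcomp A (carrier G) Agr \<sigma> a \<noteq> \<zero>\<^bsub>A\<^esub> \<and> act y \<sigma> = w})"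
  define c where "c = (\<lambda>w. finsum M f (P w))"
  define S where "S = (\<lambda>(y, \<sigma>). act y \<sigma>) ` (Sm \<times> Sa)"
  note PM = dM_props[OF m, folded Sm_def] and PA = dA_props[OF a, folded Sa_def]
  have finSm: "finite Sm" and finSa: "finite Sa" using PM PA by blast+
  have SmX: "Sm \<subseteq> X" unfolding Sm_def by blast
  have SaG: "Sa \<subseteq> carrier G" unfolding Sa_def by blast
  have Psub: "P w \<subseteq> Sm \<times> Sa" for w unfolding P_def Sa_def by auto
  have finP: "finite (P w)" for w using Psub finite_subset finSm finSa by blast
  have fC: "f p \<in> carrier M" for p
    using R(3) dM_carrier[OF m] dA_carrier[OF a] unfolding f_def by (cases p) auto
  have fD: "f (y, \<sigma>) \<in> Mgr (act y \<sigma>)" if "y \<in> Sm" "\<sigma> \<in> Sa" for y \<sigma>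
  proof -
    have y: "y \<in> X" using that SmX by blast
    have s: "\<sigma> \<in> carrier G" using that SaG by blast
    have "dcomp M X Mgr y m \<in> Mgr y" using conjunct1[OF PM] y by blast
    moreover have "dcomp A (carrier G) Agr \<sigma> a \<in> Agr \<sigma>" using conjunct1[OF PA] s by blast
    ultimately show ?thesis unfolding f_def using gradM[OF y s] by simp
  qed
  have rhs: "tens_act A G Agr X act M mact (\<lambda>x. dcomp M X Mgr x m) a w = c w"
    unfolding tens_act_def c_def P_def f_def supp_def Sm_def by simp
  have finS: "finite S" unfolding S_def using finSm finSa by blast
  have SX: "S \<subseteq> X" unfolding S_def using SmX SaG actX by auto
  have Pempty: "P w = {}" if "w \<notin> S" for w
    using that Psub unfolding S_def P_def by auto
  have sum: "mact m a = finsum M c S"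
  proof -
    have "finsum M c S = finsum M (\<lambda>w. finsum M f (P w)) S" unfolding c_def ..
    also have "\<dots> = finsum M f (\<Union>(P ` S))"
      by (rule M.add.finprod_UN_disjoint[symmetric]) (use finS finP fC in \<open>auto simp: pairwise_def disjnt_def P_def\<close>)
    also have "\<Union>(P ` S) = Sm \<times> Sa" unfolding S_def P_def Sa_def by auto
    also have "Sm \<times> Sa = (\<Union>y\<in>Sm. (\<lambda>\<sigma>. (y, \<sigma>)) ` Sa)" by auto
    also have "finsum M f \<dots> = finsum M (\<lambda>y. finsum M f ((\<lambda>\<sigma>. (y, \<sigma>)) ` Sa)) Sm"
      by (rule M.add.finprod_UN_disjoint) (use finSm finSa fC in \<open>auto simp: pairwise_def disjnt_def\<close>)
    also have "\<dots> = finsum M (\<lambda>y. finsum M (\<lambda>\<sigma>. f (y, \<sigma>)) Sa) Sm"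
      by (rule M.finsum_cong') (use fC in \<open>auto intro!: M.finsum_reindex simp: inj_on_def\<close>)
    also have "\<dots> = finsum M (\<lambda>y. mact (dcomp M X Mgr y m) a) Sm"
    proof (rule M.finsum_cong')
      fix y assume "y \<in> Sm"
      have "mact (dcomp M X Mgr y m) a = mact (dcomp M X Mgr y m) (finsum A (\<lambda>\<sigma>. dcomp A (carrier G) Agr \<sigma> a) Sa)"
        using PA by metis
      also have "\<dots> = finsum M (\<lambda>\<sigma>. f (y, \<sigma>)) Sa"
        unfolding f_def by (simp add: rm_finsum_right[OF rmM dM_carrier[OF m] finSa] dA_carrier[OF a] Pi_def)
      finally show "finsum M (\<lambda>\<sigma>. f (y, \<sigma>)) Sa = mact (dcomp M X Mgr y m) a" by simp
    qed (use R(3) dM_carrier[OF m] a in auto)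
    also have "\<dots> = mact (finsum M (\<lambda>y. dcomp M X Mgr y m) Sm) a"
      by (rule rm_finsum_left[OF rmM a finSm, symmetric]) (use dM_carrier[OF m] in auto)
    also have "\<dots> = mact m a" using PM by metis
    finally show ?thesis by simp
  qed
  have "dcomp M X Mgr w (mact m a) = c w"
  proof (rule M.dcomp_unique[OF dsM _ _ finS SX _ sum])
    show "\<forall>i\<in>X. c i \<in> Mgr i"
    proof
      fix i assume i: "i \<in> X"
      show "c i \<in> Mgr i" unfolding c_def
      proof (rule M.dsd_finsum[OF dsM i finP])
        show "\<forall>j\<in>P i. f j \<in> Mgr i"
        proof
          fix j assume j: "j \<in> P i"
          then obtain y \<sigma> where j': "j = (y, \<sigma>)" "y \<in> Sm" "\<sigma> \<in> Sa" "act y \<sigma> = i"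
            using Psub unfolding P_def by blast
          show "f j \<in> Mgr i" using fD[OF j'(2,3)] j' by simp
        qed
      qed
    qed
    show "\<forall>i. i \<notin> X \<longrightarrow> c i = \<zero>\<^bsub>M\<^esub>"
    proof (intro allI impI)
      fix i assume "i \<notin> X"
      then have "i \<notin> S" using SX by blast
      then show "c i = \<zero>\<^bsub>M\<^esub>" unfolding c_def by (simp add: Pempty)
    qed
    show "\<forall>i\<in>X - S. c i = \<zero>\<^bsub>M\<^esub>"
      using Pempty unfolding c_def by auto
  qed
  then show "dcomp M X Mgr w (mact m a) = tens_act A G Agr X act M mact (\<lambda>x. dcomp M X Mgr x m) a w"
    using rhs by simp
qed


lemma hom_mem: "(\<lambda>m x. dcomp M X Mgr x m) \<in> HomC A G Agr X act M mact Mgr M mact"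
  unfolding HomC_def using hom_tensC hom_add hom_lin hom_coact by auto

lemma r_off:
  assumes "abelian_group N" "\<forall>\<sigma>\<in>carrier G. act z \<sigma> = z" "w \<noteq> z"
  shows "r_map A G Agr X act \<delta> (cor_e A z) N nact \<phi> w = \<zero>\<^bsub>N\<^esub>"
proof -
  interpret N: abelian_group N by (rule assms(1))
  have "{(y, u, v, \<tau>). y \<in> supp N X \<phi> \<and> u \<in> X \<and> v \<in> X \<and> cor_Delta A (cor_e A z) (u, v) \<noteq> \<zero>\<^bsub>A\<^esub>
          \<and> \<tau> \<in> carrier G \<and> dcomp A (carrier G) Agr \<tau> (\<delta> (unit_tensor A v y)) \<noteq> \<zero>\<^bsub>A\<^esub>
          \<and> act u \<tau> = w} = {}"
    using assms(2,3) unfolding cor_Delta_def cor_e_def by (auto split: if_splits)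
  note E = this
  show ?thesis unfolding r_map_def E by simp
qed

lemma r_fix:
  assumes N: "right_module A N nact" and z: "z \<in> X" and zf: "\<forall>\<sigma>\<in>carrier G. act z \<sigma> = z"
    and ph: "\<phi> \<in> tensC N X" and phz: "\<forall>w. w \<noteq> z \<longrightarrow> \<phi> w = \<zero>\<^bsub>N\<^esub>"
  shows "r_map A G Agr X act (cor_delta A X) (cor_e A z) N nact \<phi> = \<phi>"
proof
  fix w
  note R = rm_facts[OF N]
  interpret N: abelian_group N by (rule R(2))
  interpret A: ring A by (rule rA)
  show "r_map A G Agr X act (cor_delta A X) (cor_e A z) N nact \<phi> w = \<phi> w"
  proof (cases "w = z")
    case False
    then show ?thesis using r_off[OF R(2) zf False] phz by simp
  next
    case True
    have phC: "\<phi> z \<in> carrier N" using ph unfolding tensC_def by blast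
    show ?thesis
    proof (cases "\<phi> z = \<zero>\<^bsub>N\<^esub>")
      case True
      then have "supp N X \<phi> = {}" using phz unfolding supp_def by auto
      then have E: "{(y, u, v, \<tau>). y \<in> supp N X \<phi> \<and> u \<in> X \<and> v \<in> X \<and> cor_Delta A (cor_e A z) (u, v) \<noteq> \<zero>\<^bsub>A\<^esub>
          \<and> \<tau> \<in> carrier G \<and> dcomp A (carrier G) Agr \<tau> (cor_delta A X (unit_tensor A v y)) \<noteq> \<zero>\<^bsub>A\<^esub>
          \<and> act u \<tau> = w} = {}" by auto
      show ?thesis unfolding r_map_def E using True \<open>w = z\<close> by simp
    next
      case nz: False
      have one: "\<one>\<^bsub>A\<^esub> \<noteq> \<zero>\<^bsub>A\<^esub>"
      proof
        assume e: "\<one>\<^bsub>A\<^esub> = \<zero>\<^bsub>A\<^esub>"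
        have "\<phi> z = nact (\<phi> z) \<one>\<^bsub>A\<^esub>" using R(7)[OF phC] by simp
        also have "\<dots> = \<zero>\<^bsub>N\<^esub>" using e rm_zero_right[OF N phC] by simp
        finally show False using nz by simp
      qed
      define T where "T = {\<tau>\<in>carrier G. dcomp A (carrier G) Agr \<tau> \<one>\<^bsub>A\<^esub> \<noteq> \<zero>\<^bsub>A\<^esub>}"
      have supp: "y \<in> supp N X \<phi> \<longleftrightarrow> y = z" for y using phz nz z unfolding supp_def by auto
      have cD: "cor_Delta A (cor_e A z) (u, v) \<noteq> \<zero>\<^bsub>A\<^esub> \<longleftrightarrow> u = z \<and> v = z" for u v
        using one unfolding cor_Delta_def cor_e_def by auto
      have cDz: "cor_Delta A (cor_e A z) (z, z) = \<one>\<^bsub>A\<^esub>" unfolding cor_Delta_def cor_e_def by simp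
      have dl: "cor_delta A X (unit_tensor A z z) = \<one>\<^bsub>A\<^esub>"
      proof -
        have "{x\<in>X. unit_tensor A z z (x, x) \<noteq> \<zero>\<^bsub>A\<^esub>} = {z}" using one z unfolding unit_tensor_def by auto
        then show ?thesis unfolding cor_delta_def by (simp add: unit_tensor_def)
      qed
      have set: "{(y, u, v, \<tau>). y \<in> supp N X \<phi> \<and> u \<in> X \<and> v \<in> X \<and> cor_Delta A (cor_e A z) (u, v) \<noteq> \<zero>\<^bsub>A\<^esub>
          \<and> \<tau> \<in> carrier G \<and> dcomp A (carrier G) Agr \<tau> (cor_delta A X (unit_tensor A v y)) \<noteq> \<zero>\<^bsub>A\<^esub>
          \<and> act u \<tau> = w} = (\<lambda>\<tau>. (z, z, z, \<tau>)) ` T"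
        using zf z \<open>w = z\<close> unfolding T_def by (auto simp: supp cD dl)
      have dAC: "dcomp A (carrier G) Agr \<tau> \<one>\<^bsub>A\<^esub> \<in> carrier A" for \<tau> using dA_carrier by simp
      have PA: "\<one>\<^bsub>A\<^esub> = finsum A (\<lambda>\<tau>. dcomp A (carrier G) Agr \<tau> \<one>\<^bsub>A\<^esub>) T" and finT: "finite T"
        using dA_props[of "\<one>\<^bsub>A\<^esub>"] unfolding T_def by simp_all
      have "r_map A G Agr X act (cor_delta A X) (cor_e A z) N nact \<phi> w
          = finsum N (\<lambda>(y, u, v, \<tau>). nact (\<phi> y) (cor_Delta A (cor_e A z) (u, v) \<otimes>\<^bsub>A\<^esub> dcomp A (carrier G) Agr \<tau> (cor_delta A X (unit_tensor A v y))))
             ((\<lambda>\<tau>. (z, z, z, \<tau>)) ` T)"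
        unfolding r_map_def set ..
      also have "\<dots> = finsum N (\<lambda>\<tau>. nact (\<phi> z) (dcomp A (carrier G) Agr \<tau> \<one>\<^bsub>A\<^esub>)) T"
        by (subst N.finsum_reindex) (auto simp: inj_on_def cDz dl dAC R(3)[OF phC] Pi_def)
      also have "\<dots> = nact (\<phi> z) \<one>\<^bsub>A\<^esub>"
        by (subst (2) PA) (rule rm_finsum_right[OF N phC finT, symmetric], use dAC in auto)
      also have "\<dots> = \<phi> w" using R(7)[OF phC] \<open>w = z\<close> by simp
      finally show ?thesis .
    qed
  qed
qed


lemma supported:
  assumes N: "right_module A N nact" and g: "g \<in> HomC A G Agr X act M mact Mgr N nact"
    and cM: "carrier M = Mgr z" and z: "z \<in> X" and m: "m \<in> carrier M" and w: "w \<noteq> z"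
  shows "g m w = \<zero>\<^bsub>N\<^esub>"
proof -
  note R = rm_facts[OF N]
  interpret N: abelian_group N by (rule R(2))
  interpret M: abelian_group M by (rule agM)
  have gT: "\<And>m. m \<in> carrier M \<Longrightarrow> g m \<in> tensC N X" and gadd: "\<And>m m'. m \<in> carrier M \<Longrightarrow> m' \<in> carrier M \<Longrightarrow> g (m \<oplus>\<^bsub>M\<^esub> m') = (\<lambda>w. g m w \<oplus>\<^bsub>N\<^esub> g m' w)"
    and gco: "\<And>m x. m \<in> carrier M \<Longrightarrow> x \<in> X \<Longrightarrow> tens_coact N (g m) x = g (mod_coact M X Mgr x m)"
    using g unfolding HomC_def by blast+
  have g0: "g \<zero>\<^bsub>M\<^esub> w' = \<zero>\<^bsub>N\<^esub>" for w'
  proof -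
    have c: "g \<zero>\<^bsub>M\<^esub> w' \<in> carrier N" using gT[of "\<zero>\<^bsub>M\<^esub>"] unfolding tensC_def by simp
    have "g \<zero>\<^bsub>M\<^esub> w' = g (\<zero>\<^bsub>M\<^esub> \<oplus>\<^bsub>M\<^esub> \<zero>\<^bsub>M\<^esub>) w'" by simp
    also have "\<dots> = g \<zero>\<^bsub>M\<^esub> w' \<oplus>\<^bsub>N\<^esub> g \<zero>\<^bsub>M\<^esub> w'" using gadd[OF M.zero_closed M.zero_closed] by metis
    finally show ?thesis by (rule ag_idem_zero[OF R(2) c])
  qed
  show ?thesis
  proof (cases "w \<in> X")
    case False
    then show ?thesis using gT[OF m] unfolding tensC_def by blast
  next
    case True
    have s: "m = finsum M (\<lambda>i. if i = z then m else \<zero>\<^bsub>M\<^esub>) {z}"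
      using M.finsum_singleton[of z "{z}" "\<lambda>i. m"] m by (simp add: eq_commute)
    have "dcomp M X Mgr w m = (if w = z then m else \<zero>\<^bsub>M\<^esub>)"
    proof (rule M.dcomp_unique[OF dsM _ _ _ _ _ s])
      show "\<forall>i\<in>X. (if i = z then m else \<zero>\<^bsub>M\<^esub>) \<in> Mgr i"
        using m cM M.dsd_zero[OF dsM] by auto
    qed (use z in auto)
    then have d0: "dcomp M X Mgr w m = \<zero>\<^bsub>M\<^esub>" using w by simp
    have "g m w = tens_coact N (g m) w w" unfolding tens_coact_def by simp
    also have "\<dots> = g \<zero>\<^bsub>M\<^esub> w" using gco[OF m True] d0 unfolding mod_coact_def by simp
    finally show ?thesis using g0 by simp
  qed
qed

lemma dir1:
  assumes cM: "carrier M = Mgr z" and z: "z \<in> X" and zf: "\<forall>\<sigma>\<in>carrier G. act z \<sigma> = z"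
  shows "formally_smooth TYPE('n) A G Agr X act (cor_delta A X) (cor_e A z) M mact Mgr"
  unfolding formally_smooth_def
proof (intro allI impI ballI)
  fix N :: "'n ring" and nact g
  assume N: "right_module A N nact" and g: "g \<in> HomC A G Agr X act M mact Mgr N nact"
  show "\<exists>g'\<in>HomC A G Agr X act M mact Mgr N nact. \<forall>m\<in>carrier M. r_map A G Agr X act (cor_delta A X) (cor_e A z) N nact (g' m) = g m"
  proof (rule bexI[OF _ g], intro ballI)
    fix m assume m: "m \<in> carrier M"
    have "g m \<in> tensC N X" using g m unfolding HomC_def by blast
    then show "r_map A G Agr X act (cor_delta A X) (cor_e A z) N nact (g m) = g m"
      using r_fix[OF N z zf] supported[OF N g cM z m] by blast
  qed
qed

lemma dir2:
  assumes z: "z \<in> X" and zf: "\<forall>\<sigma>\<in>carrier G. act z \<sigma> = z"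
    and fs: "formally_smooth TYPE('m) A G Agr X act (cor_delta A X) (cor_e A z) M mact Mgr"
  shows "carrier M = Mgr z"
proof
  interpret M: abelian_group M by (rule agM)
  obtain g' where g': "\<forall>m\<in>carrier M. r_map A G Agr X act (cor_delta A X) (cor_e A z) M mact (g' m) = (\<lambda>x. dcomp M X Mgr x m)"
  proof -
    have "\<exists>g'\<in>HomC A G Agr X act M mact Mgr M mact. \<forall>m\<in>carrier M. r_map A G Agr X act (cor_delta A X) (cor_e A z) M mact (g' m) = (\<lambda>x. dcomp M X Mgr x m)"
      using fs[unfolded formally_smooth_def, rule_format, OF rmM hom_mem] .
    then show ?thesis using that by blast
  qed
  show "carrier M \<subseteq> Mgr z"
  proof
    fix m assume m: "m \<in> carrier M"
    define S where "S = {i\<in>X. dcomp M X Mgr i m \<noteq> \<zero>\<^bsub>M\<^esub>}"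
    note P = dM_props[OF m, folded S_def]
    have off: "dcomp M X Mgr w m = \<zero>\<^bsub>M\<^esub>" if "w \<noteq> z" for w
    proof -
      have "dcomp M X Mgr w m = r_map A G Agr X act (cor_delta A X) (cor_e A z) M mact (g' m) w"
        using g' m by simp
      also have "\<dots> = \<zero>\<^bsub>M\<^esub>" by (rule r_off[OF agM zf that])
      finally show ?thesis .
    qed
    have Ss: "S \<subseteq> {z}" unfolding S_def using off by auto
    have "m = finsum M (\<lambda>i. dcomp M X Mgr i m) S" using P by blast
    also have "\<dots> = finsum M (\<lambda>i. dcomp M X Mgr i m) {z}"
      by (rule M.add.finprod_mono_neutral_cong_left) (use Ss z dM_carrier[OF m] in \<open>auto simp: S_def\<close>)
    also have "\<dots> = dcomp M X Mgr z m" using dM_carrier[OF m] by simp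
    finally have "m = dcomp M X Mgr z m" .
    then show "m \<in> Mgr z" using P z by metis
  qed
  show "Mgr z \<subseteq> carrier M" by (rule M.dsd_sub[OF dsM z])
qed

end

theorem mainTheorem5:
  fixes A :: "'a ring" and G :: "'g monoid" and Agr :: "'g \<Rightarrow> 'a set"
    and X :: "'x set" and act :: "'x \<Rightarrow> 'g \<Rightarrow> 'x" and z :: 'x
    and M :: "'m ring" and mact :: "'m \<Rightarrow> 'a \<Rightarrow> 'm" and Mgr :: "'x \<Rightarrow> 'm set"
  assumes "graded_ring A G Agr"
    and "right_Gset G X act"
    and "z \<in> X" and "\<forall>\<sigma>\<in>carrier G. act z \<sigma> = z"
    and "Xgraded_module A G Agr X act M mact Mgr"
  shows "(carrier M = Mgr z \<longrightarrow>
            formally_smooth TYPE('n) A G Agr X act (cor_delta A X) (cor_e A z) M mact Mgr)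
       \<and> (formally_smooth TYPE('m) A G Agr X act (cor_delta A X) (cor_e A z) M mact Mgr \<longrightarrow>
            carrier M = Mgr z)"
  using dir1[OF assms(1,2,5) _ assms(3,4)] dir2[OF assms(1,2,5) assms(3,4)] by blast


end
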